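(* Let $M,N:\mathbf{R}^d\to\mathbf{Vec}$ be interval decomposable persistence modules with barcodes $\mathcal{B}(M)$ and $\mathcal{B}(N)$. Then \[d_{\mathrm{I},2d}(\mathrm{rk}(M),\mathrm{rk}(N))\le d_{\mathrm{B}}(\mathcal{B}(M),\mathcal{B}(N)).\]
   Context: $\mathbf{R}^d$ has the product order; a persistence module $M:\mathbf{R}^d\to\mathbf{Vec}$ (vector spaces over a fixed field) consists of spaces $M_\mathbf{a}$ and linear maps $\varphi_M(\mathbf{a},\mathbf{b}):M_\mathbf{a}\to M_\mathbf{b}$ for $\mathbf{a}\le\mathbf{b}$, functorially. For $\varepsilon\ge0$ let $\vec\varepsilon=\varepsilon(1,\dots,1)$. Modules $M,N$ are $\varepsilon$-interleaved if there are natural families $f_\mathbf{a}:M_\mathbf{a}\to N_{\mathbf{a}+\vec\varepsilon}$, $g_\mathbf{a}:N_\mathbf{a}\to M_{\mathbf{a}+\vec\varepsilon}$ with $g_{\mathbf{a}+\vec\varepsilon}f_\mathbf{a}=\varphi_M(\mathbf{a},\mathbf{a}+2\vec\varepsilon)$ and $f_{\mathbf{a}+\vec\varepsilon}g_\mathbf{a}=\varphi_N(\mathbf{a},\mathbf{a}+2\vec\varepsilon)$. An interval of $\mathbf{R}^d$ is a nonempty subset $J$ that is convex ($\mathbf{a}\le\mathbf{b}\le\mathbf{c}$, $\mathbf{a},\mathbf{c}\in J\Rightarrow\mathbf{b}\in J$) and connected (any two points linked by a finite zigzag of comparable points in $J$); its interval module has the field at points of $J$, zero elsewhere, and identity maps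 within $J$. $M$ is interval decomposable if it is a direct sum of interval modules; its barcode $\mathcal{B}(M)$ is the multiset of these intervals. An $\varepsilon$-matching between barcodes is a partial bijection $\sigma$ such that for each matched pair $(J,\sigma(J))$ the interval modules of $J$ and $\sigma(J)$ are $\varepsilon$-interleaved, and each unmatched interval's module is $\varepsilon$-interleaved with the zero module; $d_{\mathrm{B}}$ is the infimum of $\varepsilon$ admitting an $\varepsilon$-matching. The rank invariant $\mathrm{rk}(M):\mathbf{R}^d\times\mathbf{R}^d\to\mathbf{Z}_+\cup\{\infty\}$ is $\mathrm{rk}(M)(\mathbf{a},\mathbf{b})=\mathrm{rank}\,\varphi_M(\mathbf{a},\mathbf{b})$ if $\mathbf{a}\le\mathbf{b}$ and $\infty$ otherwise. For $F,G:\mathbf{R}^d\times\mathbf{R}^d\to\mathbf{Z}_+\cup\{\infty\}$, $d_{\mathrm{I},2d}(F,G):=\inf\{\varepsilon\ge0:\forall(\mathbf{a},\mathbf{b}),\ F(\mathbf{a},\mathbf{b})\ge G(\mathbf{a}-\vec\varepsilon,\mathbf{b}+\vec\varepsilon)\text{ and }G(\mathbf{a},\mathbf{b})\ge F(\mathbf{a}-\vec\varepsilon,\mathbf{b}+\vec\varepsilon)\}$. *)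

theory Defs
  imports "HOL-Analysis.Analysis" "HOL-Library.Extended_Nat"
begin

text \<open>A persistence module over a field 'k is given by a scalar multiplication s on an
  ambient abelian group 'v making it a 'k-vector space, a family of subspaces V a
  (the spaces M_a) and maps phi a b : V a -> V b (only their values on V a matter).\<close>

definition diagv :: "real \<Rightarrow> real^'d" where
  "diagv e = (\<chi> i. e)"

definition lin_on ::
  "('k::field \<Rightarrow> 'v::ab_group_add \<Rightarrow> 'v) \<Rightarrow> ('k \<Rightarrow> 'w::ab_group_add \<Rightarrow> 'w)
    \<Rightarrow> 'v set \<Rightarrow> 'w set \<Rightarrow> ('v \<Rightarrow> 'w) \<Rightarrow> bool" where
  "lin_on s1 s2 A B f \<longleftrightarrow> f ` A \<subseteq> B \<and>
     (\<forall>x\<in>A. \<forall>y\<in>A. f (x + y) = f x + f y) \<and>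
     (\<forall>c. \<forall>x\<in>A. f (s1 c x) = s2 c (f x))"

definition pmod ::
  "('k::field \<Rightarrow> 'v::ab_group_add \<Rightarrow> 'v) \<Rightarrow> (real^'d \<Rightarrow> 'v set)
     \<Rightarrow> (real^'d \<Rightarrow> real^'d \<Rightarrow> 'v \<Rightarrow> 'v) \<Rightarrow> bool" where
  "pmod s V phi \<longleftrightarrow> vector_space s \<and>
     (\<forall>a. module.subspace s (V a)) \<and>
     (\<forall>a b. a \<le> b \<longrightarrow> lin_on s s (V a) (V b) (phi a b)) \<and>
     (\<forall>a. \<forall>x\<in>V a. phi a a x = x) \<and>
     (\<forall>a b c. a \<le> b \<longrightarrow> b \<le> c \<longrightarrow> (\<forall>x\<in>V a. phi b c (phi a b x) = phi a c x))"

definition interleaved ::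
  "('k::field \<Rightarrow> 'v::ab_group_add \<Rightarrow> 'v) \<Rightarrow> (real^'d \<Rightarrow> 'v set) \<Rightarrow> (real^'d \<Rightarrow> real^'d \<Rightarrow> 'v \<Rightarrow> 'v)
   \<Rightarrow> ('k \<Rightarrow> 'w::ab_group_add \<Rightarrow> 'w) \<Rightarrow> (real^'d \<Rightarrow> 'w set) \<Rightarrow> (real^'d \<Rightarrow> real^'d \<Rightarrow> 'w \<Rightarrow> 'w)
   \<Rightarrow> real \<Rightarrow> bool" where
  "interleaved s1 V1 phi1 s2 V2 phi2 e \<longleftrightarrow>
    (\<exists>f g. (\<forall>a. lin_on s1 s2 (V1 a) (V2 (a + diagv e)) (f a)) \<and>
           (\<forall>a. lin_on s2 s1 (V2 a) (V1 (a + diagv e)) (g a)) \<and>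
           (\<forall>a b. a \<le> b \<longrightarrow> (\<forall>x\<in>V1 a. f b (phi1 a b x) = phi2 (a + diagv e) (b + diagv e) (f a x))) \<and>
           (\<forall>a b. a \<le> b \<longrightarrow> (\<forall>y\<in>V2 a. g b (phi2 a b y) = phi1 (a + diagv e) (b + diagv e) (g a y))) \<and>
           (\<forall>a. \<forall>x\<in>V1 a. g (a + diagv e) (f a x) = phi1 a (a + diagv (2 * e)) x) \<and>
           (\<forall>a. \<forall>y\<in>V2 a. f (a + diagv e) (g a y) = phi2 a (a + diagv (2 * e)) y))"

definition is_interval_pm :: "(real^'d) set \<Rightarrow> bool" where
  "is_interval_pm J \<longleftrightarrow> J \<noteq> {} \<and>
     (\<forall>a b c. a \<in> J \<longrightarrow> c \<in> J \<longrightarrow> a \<le> b \<longrightarrow> b \<le> c \<longrightarrow> b \<in> J) \<and>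
     (\<forall>x\<in>J. \<forall>y\<in>J. (x, y) \<in> {(p, q). p \<in> J \<and> q \<in> J \<and> (p \<le> q \<or> q \<le> p)}\<^sup>*)"

text \<open>Interval module of J over the field 'k (the field regarded as a vector space
  over itself) and the zero module.\<close>
definition ivsp :: "(real^'d) set \<Rightarrow> real^'d \<Rightarrow> 'k::field set" where
  "ivsp J a = (if a \<in> J then UNIV else {0})"

definition ivmap :: "(real^'d) set \<Rightarrow> real^'d \<Rightarrow> real^'d \<Rightarrow> 'k::field \<Rightarrow> 'k" where
  "ivmap J a b x = (if a \<in> J \<and> b \<in> J then x else 0)"

definition zsp :: "real^'d \<Rightarrow> 'k::field set" where
  "zsp a = {0}"

definition zmap :: "real^'d \<Rightarrow> real^'d \<Rightarrow> 'k::field \<Rightarrow> 'k" where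
  "zmap a b x = 0"

text \<open>Interval decomposition: M is (internally) the direct sum of interval submodules
  indexed by I, the i-th one supported on the interval J i, spanned at a \<in> J i by the
  vector e i a.  This is exactly an isomorphism of M with the direct sum of the interval
  modules of the J i; the barcode is the indexed family (multiset) J over I.\<close>
definition interval_decomp ::
  "('k::field \<Rightarrow> 'v::ab_group_add \<Rightarrow> 'v) \<Rightarrow> (real^'d \<Rightarrow> 'v set) \<Rightarrow> (real^'d \<Rightarrow> real^'d \<Rightarrow> 'v \<Rightarrow> 'v)
    \<Rightarrow> 'i set \<Rightarrow> ('i \<Rightarrow> (real^'d) set) \<Rightarrow> bool" where
  "interval_decomp s V phi I J \<longleftrightarrow> (\<forall>i\<in>I. is_interval_pm (J i)) \<and>
    (\<exists>e :: 'i \<Rightarrow> real^'d \<Rightarrow> 'v.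
       (\<forall>i\<in>I. \<forall>a\<in>J i. e i a \<in> V a) \<and>
       (\<forall>i\<in>I. \<forall>a b. a \<le> b \<longrightarrow> a \<in> J i \<longrightarrow> b \<in> J i \<longrightarrow> phi a b (e i a) = e i b) \<and>
       (\<forall>i\<in>I. \<forall>a b. a \<le> b \<longrightarrow> a \<in> J i \<longrightarrow> b \<notin> J i \<longrightarrow> phi a b (e i a) = 0) \<and>
       (\<forall>a. inj_on (\<lambda>i. e i a) {i\<in>I. a \<in> J i} \<and>
            \<not> module.dependent s ((\<lambda>i. e i a) ` {i\<in>I. a \<in> J i}) \<and>
            module.span s ((\<lambda>i. e i a) ` {i\<in>I. a \<in> J i}) = V a))"

definition eps_matching ::
  "'i set \<Rightarrow> ('i \<Rightarrow> (real^'d) set) \<Rightarrow> 'j set \<Rightarrow> ('j \<Rightarrow> (real^'d) set) \<Rightarrow> 'k::field itself \<Rightarrow> real \<Rightarrow> bool" where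
  "eps_matching I1 J1 I2 J2 (K :: 'k itself) e \<longleftrightarrow>
    (\<exists>D \<sigma>. D \<subseteq> I1 \<and> inj_on \<sigma> D \<and> \<sigma> ` D \<subseteq> I2 \<and>
       (\<forall>i\<in>D. interleaved ((*) :: 'k \<Rightarrow> 'k \<Rightarrow> 'k) (ivsp (J1 i)) (ivmap (J1 i))
                          ((*) :: 'k \<Rightarrow> 'k \<Rightarrow> 'k) (ivsp (J2 (\<sigma> i))) (ivmap (J2 (\<sigma> i))) e) \<and>
       (\<forall>i\<in>I1 - D. interleaved ((*) :: 'k \<Rightarrow> 'k \<Rightarrow> 'k) (ivsp (J1 i)) (ivmap (J1 i))
                          ((*) :: 'k \<Rightarrow> 'k \<Rightarrow> 'k) zsp zmap e) \<and>
       (\<forall>j\<in>I2 - \<sigma> ` D. interleaved ((*) :: 'k \<Rightarrow> 'k \<Rightarrow> 'k) (ivsp (J2 j)) (ivmap (J2 j))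
                          ((*) :: 'k \<Rightarrow> 'k \<Rightarrow> 'k) zsp zmap e))"

text \<open>Bottleneck distance (infimum in the extended reals; Inf of the empty set is \<infinity>).\<close>
definition bottleneck ::
  "'k::field itself \<Rightarrow> 'i set \<Rightarrow> ('i \<Rightarrow> (real^'d) set) \<Rightarrow> 'j set \<Rightarrow> ('j \<Rightarrow> (real^'d) set) \<Rightarrow> ereal" where
  "bottleneck K I1 J1 I2 J2 = Inf {ereal e | e. e \<ge> 0 \<and> eps_matching I1 J1 I2 J2 K e}"

definition rank_on ::
  "('k::field \<Rightarrow> 'v::ab_group_add \<Rightarrow> 'v) \<Rightarrow> 'v set \<Rightarrow> ('v \<Rightarrow> 'v) \<Rightarrow> enat" where
  "rank_on s A f = (if \<exists>B. finite B \<and> f ` A \<subseteq> module.span s B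
                    then enat (vector_space.dim s (f ` A)) else \<infinity>)"

definition rank_inv ::
  "('k::field \<Rightarrow> 'v::ab_group_add \<Rightarrow> 'v) \<Rightarrow> (real^'d \<Rightarrow> 'v set) \<Rightarrow> (real^'d \<Rightarrow> real^'d \<Rightarrow> 'v \<Rightarrow> 'v)
    \<Rightarrow> real^'d \<Rightarrow> real^'d \<Rightarrow> enat" where
  "rank_inv s V phi a b = (if a \<le> b then rank_on s (V a) (phi a b) else \<infinity>)"

definition dist_I2d ::
  "(real^'d \<Rightarrow> real^'d \<Rightarrow> enat) \<Rightarrow> (real^'d \<Rightarrow> real^'d \<Rightarrow> enat) \<Rightarrow> ereal" where
  "dist_I2d F G = Inf {ereal e | e. e \<ge> 0 \<and>
     (\<forall>a b. F a b \<ge> G (a - diagv e) (b + diagv e) \<and> G a b \<ge> F (a - diagv e) (b + diagv e))}"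

end

theory Submission
  imports Defs
begin

lemma lin_on_zero:
  assumes "lin_on s1 s2 A B f" "(0::'v::ab_group_add) \<in> A"
  shows "f 0 = (0::'w::ab_group_add)"
proof -
  have "f (0 + 0) = f 0 + f 0" using assms unfolding lin_on_def by blast
  then show ?thesis by simp
qed

lemma diagv_simps:
  "(a::real^'d) - diagv e + diagv e = a"
  "(a::real^'d) - diagv e + diagv (2 * e) = a + diagv e"
  by (simp_all add: diagv_def vec_eq_iff)

lemma le_shift:
  assumes ab: "(a::real^'d) \<le> b" and e: "e \<ge> 0"
  shows "a - diagv e \<le> b - diagv e" "a - diagv e \<le> b + diagv e"
    "a - diagv e \<le> a + diagv e" "a + diagv e \<le> b + diagv e"
proof -
  have c: "\<And>i. a$i \<le> b$i" using ab by (simp add: less_eq_vec_def)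
  show "a - diagv e \<le> b - diagv e" unfolding less_eq_vec_def diagv_def using c by simp
  show "a - diagv e \<le> b + diagv e" unfolding less_eq_vec_def diagv_def
  proof
    fix i show "(a - (\<chi> i. e)) $ i \<le> (b + (\<chi> i. e)) $ i" using c[of i] e by simp
  qed
  show "a - diagv e \<le> a + diagv e" unfolding less_eq_vec_def diagv_def using e by simp
  show "a + diagv e \<le> b + diagv e" unfolding less_eq_vec_def diagv_def using c by simp
qed

lemma interval_convex:
  "is_interval_pm J \<Longrightarrow> a \<in> J \<Longrightarrow> c \<in> J \<Longrightarrow> a \<le> b \<Longrightarrow> b \<le> c \<Longrightarrow> b \<in> J"
  unfolding is_interval_pm_def by blast

lemma interleaved_sym:
  "interleaved s1 V1 phi1 s2 V2 phi2 e \<Longrightarrow> interleaved s2 V2 phi2 s1 V1 phi1 e"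
  unfolding interleaved_def apply (elim exE conjE) subgoal for f g apply (rule exI[of _ g], rule exI[of _ f]) by blast done

lemma interleavedE:
  assumes "interleaved s1 V1 phi1 s2 V2 phi2 e"
  obtains f g where
    "\<forall>a. lin_on s1 s2 (V1 a) (V2 (a + diagv e)) (f a)"
    "\<forall>a. lin_on s2 s1 (V2 a) (V1 (a + diagv e)) (g a)"
    "\<forall>a b. a \<le> b \<longrightarrow> (\<forall>x\<in>V1 a. f b (phi1 a b x) = phi2 (a + diagv e) (b + diagv e) (f a x))"
    "\<forall>a b. a \<le> b \<longrightarrow> (\<forall>y\<in>V2 a. g b (phi2 a b y) = phi1 (a + diagv e) (b + diagv e) (g a y))"
    "\<forall>a. \<forall>x\<in>V1 a. g (a + diagv e) (f a x) = phi1 a (a + diagv (2 * e)) x"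
    "\<forall>a. \<forall>y\<in>V2 a. f (a + diagv e) (g a y) = phi2 a (a + diagv (2 * e)) y"
  using assms unfolding interleaved_def by (elim exE conjE) (rule that)

lemma iv_key:
  fixes J J' :: "(real^'d) set"
  assumes il: "interleaved ((*) :: 'k::field \<Rightarrow> 'k \<Rightarrow> 'k) (ivsp J) (ivmap J) (*) (ivsp J') (ivmap J') e"
    and ab: "a \<le> b" and e: "e \<ge> 0" and J: "is_interval_pm J"
    and a0: "a - diagv e \<in> J" and b1: "b + diagv e \<in> J"
  shows "a \<in> J' \<and> b \<in> J'"
proof (rule ccontr)
  assume nn: "\<not> (a \<in> J' \<and> b \<in> J')"
  obtain f g where A:
    "\<forall>a. lin_on ((*) :: 'k \<Rightarrow> 'k \<Rightarrow> 'k) (*) (ivsp J a) (ivsp J' (a + diagv e)) (f a)"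
    "\<forall>a. lin_on ((*) :: 'k \<Rightarrow> 'k \<Rightarrow> 'k) (*) (ivsp J' a) (ivsp J (a + diagv e)) (g a)"
    "\<forall>a b. a \<le> b \<longrightarrow> (\<forall>x\<in>ivsp J a. f b (ivmap J a b x) = (ivmap J' (a + diagv e) (b + diagv e) (f a x) :: 'k))"
    "\<forall>a b. a \<le> b \<longrightarrow> (\<forall>y\<in>ivsp J' a. g b (ivmap J' a b y) = (ivmap J (a + diagv e) (b + diagv e) (g a y) :: 'k))"
    "\<forall>a. \<forall>x\<in>ivsp J a. g (a + diagv e) (f a x) = (ivmap J a (a + diagv (2 * e)) x :: 'k)"
    "\<forall>a. \<forall>y\<in>ivsp J' a. f (a + diagv e) (g a y) = (ivmap J' a (a + diagv (2 * e)) y :: 'k)"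
    by (rule interleavedE[OF il])
  have g: "\<And>a. lin_on ((*) :: 'k \<Rightarrow> 'k \<Rightarrow> 'k) (*) (ivsp J' a) (ivsp J (a + diagv e)) (g a)"
    using A(2) by simp
  have fn: "\<And>a b x. a \<le> b \<Longrightarrow> x \<in> ivsp J a \<Longrightarrow> f b (ivmap J a b x) = (ivmap J' (a + diagv e) (b + diagv e) (f a x) :: 'k)"
    using A(3) by simp
  have gf: "\<And>a x. x \<in> ivsp J a \<Longrightarrow> g (a + diagv e) (f a x) = (ivmap J a (a + diagv (2 * e)) x :: 'k)"
    using A(5) by simp
  let ?a0 = "a - diagv e" and ?b0 = "b - diagv e"
  have b0: "?b0 \<in> J" by (rule interval_convex[OF J a0 b1 le_shift(1)[OF ab e] le_shift(3)[OF order_refl e]])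
  have u: "(1::'k) \<in> ivsp J ?a0" "(1::'k) \<in> ivsp J ?b0" using a0 b0 by (auto simp: ivsp_def)
  have "f ?b0 (ivmap J ?a0 ?b0 1) = (ivmap J' a b (f ?a0 1) :: 'k)"
    using fn[OF le_shift(1)[OF ab e] u(1)] unfolding diagv_simps .
  then have "f ?b0 1 = (ivmap J' a b (f ?a0 1) :: 'k)" using a0 b0 by (simp add: ivmap_def)
  also have "\<dots> = 0" unfolding ivmap_def if_not_P[OF nn] ..
  finally have "g b (f ?b0 1) = g b 0" by simp
  also have "\<dots> = 0" by (rule lin_on_zero[OF g]) (simp add: ivsp_def)
  finally have z: "g b (f ?b0 (1::'k)) = 0" .
  have "g b (f ?b0 (1::'k)) = ivmap J ?b0 (b + diagv e) 1"
    using gf[OF u(2)] unfolding diagv_simps .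
  also have "\<dots> = 1" using b0 b1 by (simp add: ivmap_def)
  finally show False using z by simp
qed

lemma zero_key:
  fixes J :: "(real^'d) set"
  assumes il: "interleaved ((*) :: 'k::field \<Rightarrow> 'k \<Rightarrow> 'k) (ivsp J) (ivmap J) (*) zsp zmap e"
    and ab: "a \<le> b" and e: "e \<ge> 0" and J: "is_interval_pm J"
    and a0: "a - diagv e \<in> J" and b1: "b + diagv e \<in> J"
  shows False
proof -
  obtain f g where A:
    "\<forall>a. lin_on ((*) :: 'k \<Rightarrow> 'k \<Rightarrow> 'k) (*) (ivsp J a) (zsp (a + diagv e)) (f a)"
    "\<forall>a. lin_on ((*) :: 'k \<Rightarrow> 'k \<Rightarrow> 'k) (*) (zsp a) (ivsp J (a + diagv e)) (g a)"
    "\<forall>a b. a \<le> b \<longrightarrow> (\<forall>x\<in>ivsp J a. f b (ivmap J a b x) = (zmap (a + diagv e) (b + diagv e) (f a x) :: 'k))"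
    "\<forall>a b. a \<le> b \<longrightarrow> (\<forall>y\<in>zsp a. g b (zmap a b y) = (ivmap J (a + diagv e) (b + diagv e) (g a y) :: 'k))"
    "\<forall>a. \<forall>x\<in>ivsp J a. g (a + diagv e) (f a x) = (ivmap J a (a + diagv (2 * e)) x :: 'k)"
    "\<forall>a. \<forall>y\<in>zsp a. f (a + diagv e) (g a y) = (zmap a (a + diagv (2 * e)) y :: 'k)"
    by (rule interleavedE[OF il])
  have f: "\<And>a. lin_on ((*) :: 'k \<Rightarrow> 'k \<Rightarrow> 'k) (*) (ivsp J a) (zsp (a + diagv e)) (f a)"
    using A(1) by simp
  have g: "\<And>a. lin_on ((*) :: 'k \<Rightarrow> 'k \<Rightarrow> 'k) (*) (zsp a) (ivsp J (a + diagv e)) (g a)"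
    using A(2) by simp
  have gf: "\<And>a x. x \<in> ivsp J a \<Longrightarrow> g (a + diagv e) (f a x) = (ivmap J a (a + diagv (2 * e)) x :: 'k)"
    using A(5) by simp
  let ?a0 = "a - diagv e"
  have a1: "a + diagv e \<in> J" by (rule interval_convex[OF J a0 b1 le_shift(3)[OF ab e] le_shift(4)[OF ab e]])
  have u: "(1::'k) \<in> ivsp J ?a0" using a0 by (auto simp: ivsp_def)
  have "f ?a0 1 \<in> zsp (?a0 + diagv e)" using f[of ?a0] u unfolding lin_on_def by blast
  then have "f ?a0 1 \<in> zsp a" unfolding diagv_simps .
  then have "f ?a0 (1::'k) = 0" by (simp add: zsp_def)
  then have "g a (f ?a0 (1::'k)) = 0" using lin_on_zero[OF g] by (simp add: zsp_def)
  moreover have "g a (f ?a0 (1::'k)) = ivmap J ?a0 (a + diagv e) 1"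
    using gf[OF u] unfolding diagv_simps .
  moreover have "ivmap J ?a0 (a + diagv e) (1::'k) = 1" using a0 a1 by (simp add: ivmap_def)
  ultimately show False by simp
qed


definition cnt :: "'a set \<Rightarrow> enat" where
  "cnt S = (if finite S then enat (card S) else \<infinity>)"

lemma cnt_mono:
  assumes "inj_on h A" "h ` A \<subseteq> B"
  shows "cnt A \<le> cnt B"
proof (cases "finite B")
  case True
  then have fA: "finite A" using assms finite_subset finite_imageD by metis
  have "card A = card (h ` A)" using assms(1) by (simp add: card_image)
  also have "\<dots> \<le> card B" using True assms(2) by (rule card_mono)
  finally show ?thesis using True fA by (simp add: cnt_def)
next
  case False then show ?thesis by (simp add: cnt_def)
qed

lemma rank_lower:
  fixes s :: "'k::field \<Rightarrow> 'v::ab_group_add \<Rightarrow> 'v"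
  assumes vs: "vector_space s" and X: "X \<subseteq> f ` A" and ind: "\<not> module.dependent s X"
  shows "cnt X \<le> rank_on s A f"
proof -
  interpret VS: vector_space s by (rule vs)
  show ?thesis
  proof (cases "\<exists>B. finite B \<and> f ` A \<subseteq> VS.span B")
    case True
    then obtain B where B: "finite B" "f ` A \<subseteq> VS.span B" by blast
    have "finite X" using VS.independent_span_bound[OF B(1) ind] X B(2) by blast
    moreover have "card X \<le> VS.dim (f ` A)"
    proof -
      obtain C where C: "X \<subseteq> C" "C \<subseteq> f ` A" "\<not> VS.dependent C" "f ` A \<subseteq> VS.span C"
        by (rule VS.maximal_independent_subset_extend[OF X ind])
      have fC: "finite C" using VS.independent_span_bound[OF B(1) C(3)] C(2) B(2) by blast
      have "card X \<le> card C" by (rule card_mono[OF fC C(1)])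
      also have "card C = VS.dim (f ` A)" by (rule VS.basis_card_eq_dim[OF C(2) C(4) C(3)])
      finally show ?thesis .
    qed
    ultimately show ?thesis using True by (simp add: rank_on_def cnt_def)
  next
    case False then show ?thesis unfolding rank_on_def if_not_P[OF False] by simp
  qed
qed

lemma rank_upper:
  fixes s :: "'k::field \<Rightarrow> 'v::ab_group_add \<Rightarrow> 'v"
  assumes vs: "vector_space s" and Y: "finite Y" "f ` A \<subseteq> module.span s Y"
  shows "rank_on s A f \<le> enat (card Y)"
proof -
  interpret VS: vector_space s by (rule vs)
  have "rank_on s A f = enat (VS.dim (f ` A))" using Y by (auto simp: rank_on_def)
  moreover have "VS.dim (f ` A) \<le> card Y" by (rule VS.dim_le_card[OF Y(2) Y(1)])
  ultimately show ?thesis by simp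
qed

lemma rank_ge_cnt:
  fixes s :: "'k::field \<Rightarrow> 'v::ab_group_add \<Rightarrow> 'v"
  assumes pm: "pmod s V phi" and idc: "interval_decomp s V phi I J" and ab: "a \<le> b"
  shows "cnt {i\<in>I. a \<in> J i \<and> b \<in> J i} \<le> rank_on s (V a) (phi a b)"
proof -
  from idc obtain e where
    E1: "\<forall>i\<in>I. \<forall>a\<in>J i. e i a \<in> V a" and
    E2: "\<forall>i\<in>I. \<forall>a b. a \<le> b \<longrightarrow> a \<in> J i \<longrightarrow> b \<in> J i \<longrightarrow> phi a b (e i a) = e i b" and
    E4: "\<forall>a. inj_on (\<lambda>i. e i a) {i\<in>I. a \<in> J i} \<and>
            \<not> module.dependent s ((\<lambda>i. e i a) ` {i\<in>I. a \<in> J i}) \<and>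
            module.span s ((\<lambda>i. e i a) ` {i\<in>I. a \<in> J i}) = V a"
    unfolding interval_decomp_def by blast
  have vs: "vector_space s" using pm by (simp add: pmod_def)
  interpret VS: vector_space s by (rule vs)
  let ?S = "{i\<in>I. a \<in> J i \<and> b \<in> J i}"
  let ?X = "(\<lambda>i. e i b) ` ?S"
  have X: "?X \<subseteq> phi a b ` V a"
  proof
    fix x assume "x \<in> ?X"
    then obtain i where i: "i \<in> ?S" "x = e i b" by blast
    then have "x = phi a b (e i a)" using E2 ab by simp
    moreover have "e i a \<in> V a" using E1 i by simp
    ultimately show "x \<in> phi a b ` V a" by blast
  qed
  have sub: "?X \<subseteq> (\<lambda>i. e i b) ` {i\<in>I. b \<in> J i}" by blast
  have "\<not> VS.dependent ((\<lambda>i. e i b) ` {i\<in>I. b \<in> J i})" using E4 by blast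
  then have ind: "\<not> VS.dependent ?X" using sub VS.dependent_mono by blast
  have "inj_on (\<lambda>i. e i b) {i\<in>I. b \<in> J i}" using E4 by blast
  then have inj: "inj_on (\<lambda>i. e i b) ?S" by (rule inj_on_subset) auto
  have "cnt ?S = cnt ?X" using inj by (simp add: cnt_def card_image finite_image_iff)
  then show ?thesis using rank_lower[OF vs X ind] by simp
qed

lemma rank_le_cnt:
  fixes s :: "'k::field \<Rightarrow> 'v::ab_group_add \<Rightarrow> 'v"
  assumes pm: "pmod s V phi" and idc: "interval_decomp s V phi I J" and ab: "a \<le> b"
  shows "rank_on s (V a) (phi a b) \<le> cnt {i\<in>I. a \<in> J i \<and> b \<in> J i}"
proof (cases "finite {i\<in>I. a \<in> J i \<and> b \<in> J i}")
  case False then show ?thesis by (simp add: cnt_def)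
next
  case True
  let ?S = "{i\<in>I. a \<in> J i \<and> b \<in> J i}"
  from idc obtain e where
    E1: "\<forall>i\<in>I. \<forall>a\<in>J i. e i a \<in> V a" and
    E2: "\<forall>i\<in>I. \<forall>a b. a \<le> b \<longrightarrow> a \<in> J i \<longrightarrow> b \<in> J i \<longrightarrow> phi a b (e i a) = e i b" and
    E3: "\<forall>i\<in>I. \<forall>a b. a \<le> b \<longrightarrow> a \<in> J i \<longrightarrow> b \<notin> J i \<longrightarrow> phi a b (e i a) = 0" and
    E4: "\<forall>a. inj_on (\<lambda>i. e i a) {i\<in>I. a \<in> J i} \<and>
            \<not> module.dependent s ((\<lambda>i. e i a) ` {i\<in>I. a \<in> J i}) \<and>
            module.span s ((\<lambda>i. e i a) ` {i\<in>I. a \<in> J i}) = V a"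
    unfolding interval_decomp_def by blast
  have vs: "vector_space s" using pm by (simp add: pmod_def)
  interpret VS: vector_space s by (rule vs)
  have sub: "VS.subspace (V a)" using pm by (simp add: pmod_def)
  have lin: "lin_on s s (V a) (V b) (phi a b)" using pm ab by (simp add: pmod_def)
  let ?Y = "(\<lambda>i. e i b) ` ?S"
  let ?P = "{v \<in> V a. phi a b v \<in> VS.span ?Y}"
  have f0: "phi a b 0 = 0" by (rule lin_on_zero[OF lin VS.subspace_0[OF sub]])
  have sP: "VS.subspace ?P"
  proof (rule VS.subspaceI)
    show "0 \<in> ?P" using VS.subspace_0[OF sub] f0 VS.span_zero by auto
  next
    fix x y assume "x \<in> ?P" "y \<in> ?P"
    then show "x + y \<in> ?P" using VS.subspace_add[OF sub] lin VS.span_add unfolding lin_on_def by auto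
  next
    fix c x assume "x \<in> ?P"
    then show "s c x \<in> ?P" using VS.subspace_scale[OF sub] lin VS.span_scale unfolding lin_on_def by auto
  qed
  have E: "(\<lambda>i. e i a) ` {i\<in>I. a \<in> J i} \<subseteq> ?P"
  proof
    fix x assume "x \<in> (\<lambda>i. e i a) ` {i\<in>I. a \<in> J i}"
    then obtain i where i: "i \<in> I" "a \<in> J i" "x = e i a" by blast
    have "x \<in> V a" using E1 i by auto
    moreover have "phi a b x \<in> VS.span ?Y"
    proof (cases "b \<in> J i")
      case True
      then have "phi a b x = e i b" using E2 i ab by auto
      moreover have "e i b \<in> ?Y" using True i by blast
      ultimately show ?thesis using VS.span_base by simp
    next
      case False
      then have "phi a b x = 0" using E3 i ab by auto
      then show ?thesis using VS.span_zero by simp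
    qed
    ultimately show "x \<in> ?P" by simp
  qed
  have Va: "VS.span ((\<lambda>i. e i a) ` {i\<in>I. a \<in> J i}) = V a" using E4 by blast
  have "V a \<subseteq> ?P" using VS.span_minimal[OF E sP] Va by simp
  then have img: "phi a b ` V a \<subseteq> VS.span ?Y" by auto
  have "rank_on s (V a) (phi a b) \<le> enat (card ?Y)" by (rule rank_upper[OF vs _ img]) (simp add: True)
  also have "card ?Y \<le> card ?S" by (rule card_image_le[OF True])
  then have "enat (card ?Y) \<le> cnt ?S" using True by (simp add: cnt_def)
  finally show ?thesis .
qed

theorem corollary6p4:
  fixes sM :: "'k::field \<Rightarrow> 'v::ab_group_add \<Rightarrow> 'v"
    and VM :: "real^'d \<Rightarrow> 'v set" and phiM :: "real^'d \<Rightarrow> real^'d \<Rightarrow> 'v \<Rightarrow> 'v"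
    and sN :: "'k \<Rightarrow> 'w::ab_group_add \<Rightarrow> 'w"
    and VN :: "real^'d \<Rightarrow> 'w set" and phiN :: "real^'d \<Rightarrow> real^'d \<Rightarrow> 'w \<Rightarrow> 'w"
    and IM :: "'i set" and JM :: "'i \<Rightarrow> (real^'d) set"
    and IN :: "'j set" and JN :: "'j \<Rightarrow> (real^'d) set"
  assumes "pmod sM VM phiM" and "pmod sN VN phiN"
    and "interval_decomp sM VM phiM IM JM"
    and "interval_decomp sN VN phiN IN JN"
  shows "dist_I2d (rank_inv sM VM phiM) (rank_inv sN VN phiN)
           \<le> bottleneck TYPE('k) IM JM IN JN"
proof -
  have intM: "\<And>i. i \<in> IM \<Longrightarrow> is_interval_pm (JM i)" using assms(3) by (simp add: interval_decomp_def)
  have intN: "\<And>j. j \<in> IN \<Longrightarrow> is_interval_pm (JN j)" using assms(4) by (simp add: interval_decomp_def)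
  have key: "rank_inv sM VM phiM a b \<ge> rank_inv sN VN phiN (a - diagv e) (b + diagv e) \<and>
             rank_inv sN VN phiN a b \<ge> rank_inv sM VM phiM (a - diagv e) (b + diagv e)"
    if e: "e \<ge> 0" and m: "eps_matching IM JM IN JN TYPE('k) e" for e a b
  proof (cases "a \<le> b")
    case False then show ?thesis by (simp add: rank_inv_def)
  next
    case ab: True
    let ?a = "a - diagv e" and ?b = "b + diagv e"
    have ab': "?a \<le> ?b" by (rule le_shift(2)[OF ab e])
    obtain D \<sigma> where D: "D \<subseteq> IM" "inj_on \<sigma> D" "\<sigma> ` D \<subseteq> IN" and
      mt: "\<forall>i\<in>D. interleaved ((*) :: 'k \<Rightarrow> 'k \<Rightarrow> 'k) (ivsp (JM i)) (ivmap (JM i))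
                          ((*) :: 'k \<Rightarrow> 'k \<Rightarrow> 'k) (ivsp (JN (\<sigma> i))) (ivmap (JN (\<sigma> i))) e" and
      uM: "\<forall>i\<in>IM - D. interleaved ((*) :: 'k \<Rightarrow> 'k \<Rightarrow> 'k) (ivsp (JM i)) (ivmap (JM i))
                          ((*) :: 'k \<Rightarrow> 'k \<Rightarrow> 'k) zsp zmap e" and
      uN: "\<forall>j\<in>IN - \<sigma> ` D. interleaved ((*) :: 'k \<Rightarrow> 'k \<Rightarrow> 'k) (ivsp (JN j)) (ivmap (JN j))
                          ((*) :: 'k \<Rightarrow> 'k \<Rightarrow> 'k) zsp zmap e"
      using m unfolding eps_matching_def by (elim exE conjE) (rule that)
    let ?SM = "{i\<in>IM. a \<in> JM i \<and> b \<in> JM i}" and ?SN = "{j\<in>IN. a \<in> JN j \<and> b \<in> JN j}"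
    let ?SM' = "{i\<in>IM. ?a \<in> JM i \<and> ?b \<in> JM i}" and ?SN' = "{j\<in>IN. ?a \<in> JN j \<and> ?b \<in> JN j}"
    have SN'D: "?SN' \<subseteq> \<sigma> ` D"
    proof
      fix j assume j: "j \<in> ?SN'"
      show "j \<in> \<sigma> ` D"
      proof (rule ccontr)
        assume "j \<notin> \<sigma> ` D"
        then have "interleaved ((*) :: 'k \<Rightarrow> 'k \<Rightarrow> 'k) (ivsp (JN j)) (ivmap (JN j)) (*) zsp zmap e"
          using uN j by blast
        moreover have "j \<in> IN" "?a \<in> JN j" "?b \<in> JN j" using j by auto
        ultimately show False using zero_key[OF _ ab e intN] by blast
      qed
    qed
    have c1: "cnt ?SN' \<le> cnt ?SM"
    proof (rule cnt_mono)
      show "inj_on (inv_into D \<sigma>) ?SN'" by (rule inj_on_inv_into[OF SN'D])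
      show "inv_into D \<sigma> ` ?SN' \<subseteq> ?SM"
      proof
        fix x assume "x \<in> inv_into D \<sigma> ` ?SN'"
        then obtain j where j: "j \<in> ?SN'" "x = inv_into D \<sigma> j" by blast
        have jD: "j \<in> \<sigma> ` D" using j SN'D by blast
        have xD: "x \<in> D" using j(2) jD by (simp add: inv_into_into)
        have sx: "\<sigma> x = j" using j(2) jD by (simp add: f_inv_into_f)
        have "interleaved ((*) :: 'k \<Rightarrow> 'k \<Rightarrow> 'k) (ivsp (JM x)) (ivmap (JM x)) (*) (ivsp (JN j)) (ivmap (JN j)) e"
          using mt xD sx by blast
        then have il: "interleaved ((*) :: 'k \<Rightarrow> 'k \<Rightarrow> 'k) (ivsp (JN j)) (ivmap (JN j)) (*) (ivsp (JM x)) (ivmap (JM x)) e"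
          by (rule interleaved_sym)
        have "j \<in> IN" "?a \<in> JN j" "?b \<in> JN j" using j by auto
        then have "a \<in> JM x \<and> b \<in> JM x" using iv_key[OF il ab e intN] by blast
        then show "x \<in> ?SM" using xD D(1) by blast
      qed
    qed
    have SM'D: "?SM' \<subseteq> D"
    proof
      fix i assume i: "i \<in> ?SM'"
      show "i \<in> D"
      proof (rule ccontr)
        assume "i \<notin> D"
        then have "interleaved ((*) :: 'k \<Rightarrow> 'k \<Rightarrow> 'k) (ivsp (JM i)) (ivmap (JM i)) (*) zsp zmap e"
          using uM i by blast
        moreover have "i \<in> IM" "?a \<in> JM i" "?b \<in> JM i" using i by auto
        ultimately show False using zero_key[OF _ ab e intM] by blast
      qed
    qed
    have c2: "cnt ?SM' \<le> cnt ?SN"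
    proof (rule cnt_mono)
      show "inj_on \<sigma> ?SM'" using D(2) SM'D inj_on_subset by blast
      show "\<sigma> ` ?SM' \<subseteq> ?SN"
      proof
        fix y assume "y \<in> \<sigma> ` ?SM'"
        then obtain i where i: "i \<in> ?SM'" "y = \<sigma> i" by blast
        have iD: "i \<in> D" using i SM'D by blast
        have il: "interleaved ((*) :: 'k \<Rightarrow> 'k \<Rightarrow> 'k) (ivsp (JM i)) (ivmap (JM i)) (*) (ivsp (JN (\<sigma> i))) (ivmap (JN (\<sigma> i))) e"
          using mt iD by blast
        have "i \<in> IM" "?a \<in> JM i" "?b \<in> JM i" using i by auto
        then have "a \<in> JN (\<sigma> i) \<and> b \<in> JN (\<sigma> i)" using iv_key[OF il ab e intM] by blast
        then show "y \<in> ?SN" using iD D(3) i(2) by blast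
      qed
    qed
    have "rank_inv sN VN phiN ?a ?b = rank_on sN (VN ?a) (phiN ?a ?b)" using ab' by (simp add: rank_inv_def)
    also have "\<dots> \<le> cnt ?SN'" by (rule rank_le_cnt[OF assms(2) assms(4) ab'])
    also have "\<dots> \<le> cnt ?SM" by (rule c1)
    also have "\<dots> \<le> rank_on sM (VM a) (phiM a b)" by (rule rank_ge_cnt[OF assms(1) assms(3) ab])
    also have "\<dots> = rank_inv sM VM phiM a b" using ab by (simp add: rank_inv_def)
    finally have r1: "rank_inv sN VN phiN ?a ?b \<le> rank_inv sM VM phiM a b" .
    have "rank_inv sM VM phiM ?a ?b = rank_on sM (VM ?a) (phiM ?a ?b)" using ab' by (simp add: rank_inv_def)
    also have "\<dots> \<le> cnt ?SM'" by (rule rank_le_cnt[OF assms(1) assms(3) ab'])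
    also have "\<dots> \<le> cnt ?SN" by (rule c2)
    also have "\<dots> \<le> rank_on sN (VN a) (phiN a b)" by (rule rank_ge_cnt[OF assms(2) assms(4) ab])
    also have "\<dots> = rank_inv sN VN phiN a b" using ab by (simp add: rank_inv_def)
    finally have r2: "rank_inv sM VM phiM ?a ?b \<le> rank_inv sN VN phiN a b" .
    show ?thesis using r1 r2 by blast
  qed
  show ?thesis
    unfolding dist_I2d_def bottleneck_def
  proof (rule Inf_superset_mono)
    show "{ereal e |e. 0 \<le> e \<and> eps_matching IM JM IN JN TYPE('k) e}
      \<subseteq> {ereal e |e. 0 \<le> e \<and>
          (\<forall>a b. rank_inv sN VN phiN (a - diagv e) (b + diagv e) \<le> rank_inv sM VM phiM a b \<and>
                 rank_inv sM VM phiM (a - diagv e) (b + diagv e) \<le> rank_inv sN VN phiN a b)}"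
      using key by blast
  qed
qed

end
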